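(* Let $G$ be a finite group, $\pi$ a unitary representation of $G$ on an infinite dimensional Hilbert space, and $(H,\pi)$ a $\kappa$-saturated, $\kappa$-strongly homogeneous model of $IHS_\pi$ ($\kappa$ uncountable inaccessible). Let $\vec a=(a_1,\dots,a_n)\in H^n$ and let $B,C\subset H$ be small. Then $\vec a$ is $\ast$-independent from $B$ over $C$ if and only if $\Pr_{\overline{B\cup C}}(a_j)=\Pr_{\overline{C}}(a_j)$ for each $1\le j\le n$.
   Context: Hilbert spaces are metric structures in continuous logic in the language $\mathcal{L}=\{0,-,\dot 2,\frac{x+y}{2}, e^{i\theta}:\theta\in 2\pi\mathbb{Q}\}$; $\mathcal{L}_\pi=\mathcal{L}\cup\{\pi(g):g\in G\}$; $IHS_\pi$ is the complete $\mathcal{L}_\pi$-theory of the given representation. "Small" means of cardinality $<\kappa$. $\overline{A}$ denotes the algebraic closure in $\mathcal{L}_\pi$ and $\Pr_D$ the orthogonal projection onto a closed subspace $D$. $W_1,\dots,W_k$ are the irreducible unitary representations of $G$ up to isomorphism and $P_i$ is the orthogonal projection onto the isotypic component of $W_i$. $\vec a$ is $\ast$-independent from $B$ over $C$ if $\Pr_{\overline{B\cup C}}(P_i(a_j))=\Pr_{\overline{C}}(P_i(a_j))$ for all $1\le j\le n$, $1\le i\le k$. *)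

theory Defs
  imports "HOL-Analysis.Analysis" "HOL-Algebra.Group"
begin

text \<open>A complex Hilbert space is modelled as a real Hilbert space (type class
real_inner + complete_space) together with a complex structure J (multiplication
by the imaginary unit). The real inner product is the real part of the complex one.\<close>

definition cplx_structure :: "('a::real_inner \<Rightarrow> 'a) \<Rightarrow> bool" where
  "cplx_structure J \<longleftrightarrow> linear J \<and> (\<forall>x. J (J x) = - x) \<and>
     (\<forall>x y. inner (J x) (J y) = inner x y)"

definition clinear :: "('a::real_inner \<Rightarrow> 'a) \<Rightarrow> ('a \<Rightarrow> 'a) \<Rightarrow> bool" where
  "clinear J T \<longleftrightarrow> linear T \<and> (\<forall>x. T (J x) = J (T x))"

definition unitary_rep :: "('g, 'b) monoid_scheme \<Rightarrow> ('a::real_inner \<Rightarrow> 'a) \<Rightarrow> ('g \<Rightarrow> 'a \<Rightarrow> 'a) \<Rightarrow> bool" where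
  "unitary_rep G J \<pi> \<longleftrightarrow>
     (\<forall>g\<in>carrier G. clinear J (\<pi> g) \<and> bij (\<pi> g) \<and>
        (\<forall>x y. inner (\<pi> g x) (\<pi> g y) = inner x y)) \<and>
     (\<forall>g\<in>carrier G. \<forall>h\<in>carrier G. \<pi> (g \<otimes>\<^bsub>G\<^esub> h) = \<pi> g \<circ> \<pi> h) \<and>
     \<pi> \<one>\<^bsub>G\<^esub> = id"

definition csubspace :: "('a::real_inner \<Rightarrow> 'a) \<Rightarrow> 'a set \<Rightarrow> bool" where
  "csubspace J V \<longleftrightarrow> subspace V \<and> closed V \<and> J ` V \<subseteq> V"

definition orth_proj :: "'a::real_inner set \<Rightarrow> 'a \<Rightarrow> 'a" where
  "orth_proj D x = (THE y. y \<in> D \<and> (\<forall>z\<in>D. inner (x - y) z = 0))"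

text \<open>Algebraic closure in the language L_pi of Hilbert spaces with the G-action:
the closed complex linear span of the G-orbit of A.\<close>
definition acl_pi :: "('g, 'b) monoid_scheme \<Rightarrow> ('a::real_inner \<Rightarrow> 'a) \<Rightarrow> ('g \<Rightarrow> 'a \<Rightarrow> 'a) \<Rightarrow> 'a set \<Rightarrow> 'a set" where
  "acl_pi G J \<pi> A = closure (span (\<Union>g\<in>carrier G. \<pi> g ` A \<union> J ` \<pi> g ` A))"

definition inv_subspace :: "('g, 'b) monoid_scheme \<Rightarrow> ('a::real_inner \<Rightarrow> 'a) \<Rightarrow> ('g \<Rightarrow> 'a \<Rightarrow> 'a) \<Rightarrow> 'a set \<Rightarrow> bool" where
  "inv_subspace G J \<pi> V \<longleftrightarrow> csubspace J V \<and> (\<forall>g\<in>carrier G. \<pi> g ` V \<subseteq> V)"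

definition irreducible_subrep :: "('g, 'b) monoid_scheme \<Rightarrow> ('a::real_inner \<Rightarrow> 'a) \<Rightarrow> ('g \<Rightarrow> 'a \<Rightarrow> 'a) \<Rightarrow> 'a set \<Rightarrow> bool" where
  "irreducible_subrep G J \<pi> V \<longleftrightarrow> inv_subspace G J \<pi> V \<and> V \<noteq> {0} \<and>
     (\<forall>W. inv_subspace G J \<pi> W \<and> W \<subseteq> V \<longrightarrow> W = {0} \<or> W = V)"

definition subrep_iso :: "('g, 'b) monoid_scheme \<Rightarrow> ('a::real_inner \<Rightarrow> 'a) \<Rightarrow> ('g \<Rightarrow> 'a \<Rightarrow> 'a) \<Rightarrow> 'a set \<Rightarrow> 'a set \<Rightarrow> bool" where
  "subrep_iso G J \<pi> U V \<longleftrightarrow> (\<exists>T. clinear J T \<and> bij_betw T U V \<and>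
     (\<forall>g\<in>carrier G. \<forall>x\<in>U. T (\<pi> g x) = \<pi> g (T x)))"

definition isotypic :: "('g, 'b) monoid_scheme \<Rightarrow> ('a::real_inner \<Rightarrow> 'a) \<Rightarrow> ('g \<Rightarrow> 'a \<Rightarrow> 'a) \<Rightarrow> 'a set \<Rightarrow> 'a set" where
  "isotypic G J \<pi> U = closure (span (\<Union>{V. inv_subspace G J \<pi> V \<and> subrep_iso G J \<pi> U V}))"

text \<open>Star-independence of (a_1,...,a_n) from B over C. The isotypic projections P_i
range over all irreducible types occurring in H (for types not occurring, P_i = 0 and the
condition is trivial).\<close>
definition star_indep :: "('g, 'b) monoid_scheme \<Rightarrow> ('a::real_inner \<Rightarrow> 'a) \<Rightarrow> ('g \<Rightarrow> 'a \<Rightarrow> 'a)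
    \<Rightarrow> (nat \<Rightarrow> 'a) \<Rightarrow> nat \<Rightarrow> 'a set \<Rightarrow> 'a set \<Rightarrow> bool" where
  "star_indep G J \<pi> a n B C \<longleftrightarrow>
     (\<forall>j\<in>{1..n}. \<forall>U. irreducible_subrep G J \<pi> U \<longrightarrow>
        orth_proj (acl_pi G J \<pi> (B \<union> C)) (orth_proj (isotypic G J \<pi> U) (a j)) =
        orth_proj (acl_pi G J \<pi> C) (orth_proj (isotypic G J \<pi> U) (a j)))"

end

theory Submission
  imports Defs
begin

lemma subspace_closure_gen:
  fixes S :: "'a::real_normed_vector set"
  assumes "subspace S" shows "subspace (closure S)"
  unfolding subspace_def
proof (intro conjI ballI allI)
  have "0 \<in> S" using assms by (rule subspace_0)
  then show "0 \<in> closure S" using closure_subset by (rule subsetD[rotated])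
next
  fix x y assume x: "x \<in> closure S" and y: "y \<in> closure S"
  obtain f where f: "\<And>n. f n \<in> S" "f \<longlonglongrightarrow> x" using x unfolding closure_sequential by auto
  obtain g where g: "\<And>n. g n \<in> S" "g \<longlonglongrightarrow> y" using y unfolding closure_sequential by auto
  have "(\<lambda>n. f n + g n) \<longlonglongrightarrow> x + y" using f(2) g(2) by (rule tendsto_add)
  moreover have "\<And>n. f n + g n \<in> S" using f(1) g(1) assms by (simp add: subspace_add)
  ultimately show "x + y \<in> closure S" unfolding closure_sequential by (intro exI[where x="\<lambda>n. f n + g n"]) blast
next
  fix c :: real and x assume x: "x \<in> closure S"
  obtain f where f: "\<And>n. f n \<in> S" "f \<longlonglongrightarrow> x" using x unfolding closure_sequential by auto
  have "(\<lambda>n. c *\<^sub>R f n) \<longlonglongrightarrow> c *\<^sub>R x" using f(2) by (intro tendsto_scaleR tendsto_const)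
  moreover have "\<And>n. c *\<^sub>R f n \<in> S" using f(1) assms by (simp add: subspace_scale)
  ultimately show "c *\<^sub>R x \<in> closure S" unfolding closure_sequential by (intro exI[where x="\<lambda>n. c *\<^sub>R f n"]) blast
qed

lemma parallelogram_gen:
  fixes a b :: "'a::real_inner"
  shows "(norm (a + b))\<^sup>2 + (norm (a - b))\<^sup>2 = 2 * (norm a)\<^sup>2 + 2 * (norm b)\<^sup>2"
  by (simp add: power2_norm_eq_inner inner_add_left inner_add_right inner_diff_left inner_diff_right inner_commute)

lemma norm_diff_scale_sq:
  fixes w z :: "'a::real_inner"
  shows "(norm (w - t *\<^sub>R z))\<^sup>2 = (norm w)\<^sup>2 - 2 * t * inner w z + t\<^sup>2 * (norm z)\<^sup>2"
proof -
  have "(norm (w - t *\<^sub>R z))\<^sup>2 = inner (w - t *\<^sub>R z) (w - t *\<^sub>R z)" by (rule power2_norm_eq_inner)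
  also have "\<dots> = inner w w - 2 * t * inner w z + t\<^sup>2 * inner z z"
    by (simp add: inner_diff_left inner_diff_right inner_commute power2_eq_square algebra_simps)
  finally show ?thesis by (simp only: power2_norm_eq_inner)
qed

lemma proj_exists:
  fixes V :: "'a::{real_inner,complete_space} set"
  assumes sV: "subspace V" and cV: "closed V"
  shows "\<exists>y\<in>V. \<forall>z\<in>V. inner (x - y) z = 0"
proof -
  define N where "N = (\<lambda>v. norm (x - v)) ` V"
  define d where "d = Inf N"
  have Nne: "N \<noteq> {}" using sV subspace_0 N_def by blast
  have bdd: "bdd_below N" unfolding N_def by (rule bdd_belowI[of _ 0]) auto
  have dle: "d \<le> norm (x - v)" if "v \<in> V" for v
    unfolding d_def N_def using bdd N_def that by (auto intro: cInf_lower)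
  have d0: "0 \<le> d" unfolding d_def using Nne bdd by (intro cInf_greatest) (auto simp: N_def)
  have "\<exists>v\<in>V. (norm (x - v))\<^sup>2 < d\<^sup>2 + 1 / (real n + 1)" for n
  proof -
    have "d < sqrt (d\<^sup>2 + 1 / (real n + 1))"
      using d0 by (intro real_less_rsqrt) (simp add: add_pos_nonneg)
    then obtain v where v: "v \<in> V" "norm (x - v) < sqrt (d\<^sup>2 + 1 / (real n + 1))"
      using cInf_less_iff[OF Nne bdd] unfolding d_def N_def by auto
    then have "(norm (x - v))\<^sup>2 < d\<^sup>2 + 1 / (real n + 1)"
      using real_sqrt_less_iff[of "(norm (x - v))\<^sup>2" "d\<^sup>2 + 1 / (real n + 1)"] by simp
    then show ?thesis using v by blast
  qed
  then obtain v where vV: "\<And>n. v n \<in> V" and vn: "\<And>n. (norm (x - v n))\<^sup>2 < d\<^sup>2 + 1 / (real n + 1)"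
    by metis
  have key: "(norm (v m - v n))\<^sup>2 \<le> 2 / (real n + 1) + 2 / (real m + 1)" for m n
  proof -
    have mid: "(1/2) *\<^sub>R (v n + v m) \<in> V" using vV sV by (simp add: subspace_add subspace_scale)
    have "d\<^sup>2 \<le> (norm (x - (1/2) *\<^sub>R (v n + v m)))\<^sup>2" using dle[OF mid] d0 by (simp add: power_mono)
    moreover have "(x - v n) + (x - v m) = 2 *\<^sub>R (x - (1/2) *\<^sub>R (v n + v m))" by (simp add: algebra_simps scaleR_2)
    then have "(norm ((x - v n) + (x - v m)))\<^sup>2 = 4 * (norm (x - (1/2) *\<^sub>R (v n + v m)))\<^sup>2"
      by (simp add: power2_eq_square)
    moreover have eq: "(x - v n) - (x - v m) = v m - v n" by simp
    have "(norm ((x - v n) + (x - v m)))\<^sup>2 + (norm (v m - v n))\<^sup>2 = 2 * (norm (x - v n))\<^sup>2 + 2 * (norm (x - v m))\<^sup>2"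
      using parallelogram_gen[of "x - v n" "x - v m"] unfolding eq .
    ultimately show ?thesis using vn[of n] vn[of m] by linarith
  qed
  have "Cauchy v"
  proof (rule metric_CauchyI)
    fix e :: real assume e: "e > 0"
    obtain M :: nat where M: "4 / e\<^sup>2 < real M" using reals_Archimedean2 by blast
    show "\<exists>M. \<forall>m\<ge>M. \<forall>n\<ge>M. dist (v m) (v n) < e"
    proof (intro exI allI impI)
      fix m n assume m: "m \<ge> M" and n: "n \<ge> M"
      have e2: "e\<^sup>2 > 0" using e by simp
      have "4 / e\<^sup>2 < real M + 1" using M by simp
      then have "4 < e\<^sup>2 * (real M + 1)" using e2 by (simp add: divide_less_eq mult.commute)
      then have h: "4 / (real M + 1) < e\<^sup>2" by (simp add: divide_less_eq)
      have "2 / (real n + 1) \<le> 2 / (real M + 1)" using n by (simp add: frac_le)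
      moreover have "2 / (real m + 1) \<le> 2 / (real M + 1)" using m by (simp add: frac_le)
      ultimately have "(norm (v m - v n))\<^sup>2 < e\<^sup>2" using key[of m n] h by linarith
      then show "dist (v m) (v n) < e" using e by (simp add: dist_norm power_less_imp_less_base)
    qed
  qed
  then obtain y where y: "v \<longlonglongrightarrow> y" using convergent_eq_Cauchy by blast
  have yV: "y \<in> V" using closed_sequentially[OF cV vV y] .
  have "(\<lambda>n. (norm (x - v n))\<^sup>2) \<longlonglongrightarrow> (norm (x - y))\<^sup>2"
    using y by (intro tendsto_intros)
  moreover have "(\<lambda>n. d\<^sup>2 + 1 / (real n + 1)) \<longlonglongrightarrow> d\<^sup>2 + 0"
  proof -
    have "(\<lambda>n. 1 / (real n + 1)) \<longlonglongrightarrow> 0"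
      using LIMSEQ_inverse_real_of_nat by (simp add: inverse_eq_divide add.commute)
    then show ?thesis by (intro tendsto_add tendsto_const)
  qed
  ultimately have yd: "(norm (x - y))\<^sup>2 \<le> d\<^sup>2"
    using vn by (intro LIMSEQ_le[where X="\<lambda>n. (norm (x - v n))\<^sup>2"]) (auto intro: less_imp_le)
  have opt: "(norm (x - y))\<^sup>2 \<le> (norm (x - w))\<^sup>2" if "w \<in> V" for w
    using yd dle[OF that] d0 by (meson order_trans power_mono)
  show ?thesis
  proof (intro bexI[OF _ yV] ballI)
    fix z assume zV: "z \<in> V"
    show "inner (x - y) z = 0"
    proof (cases "z = 0")
      case True then show ?thesis by simp
    next
      case False
      define c where "c = inner (x - y) z"
      define t where "t = c / (norm z)\<^sup>2"
      have nz: "(norm z)\<^sup>2 > 0" using False by simp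
      have "y + t *\<^sub>R z \<in> V" using sV yV zV by (simp add: subspace_add subspace_scale)
      then have "(norm (x - y))\<^sup>2 \<le> (norm ((x - y) - t *\<^sub>R z))\<^sup>2" using opt by (simp add: algebra_simps)
      then have "0 \<le> - 2 * t * c + t\<^sup>2 * (norm z)\<^sup>2" using norm_diff_scale_sq[of "x - y" t z] c_def by simp
      also have "- 2 * t * c + t\<^sup>2 * (norm z)\<^sup>2 = - c\<^sup>2 / (norm z)\<^sup>2"
        using nz unfolding t_def by (simp add: field_simps power2_eq_square)
      finally have "c\<^sup>2 \<le> 0" using nz by (simp add: divide_le_0_iff)
      then show ?thesis unfolding c_def by simp
    qed
  qed
qed


section \<open>Orthogonal projections\<close>

lemma orth_uniq_aux:
  fixes V :: "'a::{real_inner,complete_space} set"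
  assumes "subspace V" "y \<in> V" "\<forall>z\<in>V. inner (x - y) z = 0" "y' \<in> V" "\<forall>z\<in>V. inner (x - y') z = 0"
  shows "y' = y"
proof -
  have d: "y - y' \<in> V" by (rule subspace_diff[OF assms(1) assms(2) assms(4)])
  have a: "inner (x - y') (y - y') = 0" using assms(5) d by blast
  have b: "inner (x - y) (y - y') = 0" using assms(3) d by blast
  have "inner (y - y') (y - y') = inner (x - y') (y - y') - inner (x - y) (y - y')"
    by (simp add: inner_diff_left)
  then have "inner (y - y') (y - y') = 0" using a b by simp
  then show ?thesis by simp
qed

lemma orth_proj_char:
  fixes V :: "'a::{real_inner,complete_space} set"
  assumes "subspace V" "closed V"
  shows "orth_proj V x \<in> V \<and> (\<forall>z\<in>V. inner (x - orth_proj V x) z = 0)"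
proof -
  obtain y where y: "y \<in> V" "\<forall>z\<in>V. inner (x - y) z = 0" using proj_exists[OF assms] by blast
  show ?thesis unfolding orth_proj_def
  proof (rule theI[where a=y])
    show "y \<in> V \<and> (\<forall>z\<in>V. inner (x - y) z = 0)" using y by blast
    fix y' assume "y' \<in> V \<and> (\<forall>z\<in>V. inner (x - y') z = 0)"
    then show "y' = y" using orth_uniq_aux[OF assms(1) y] by blast
  qed
qed

lemma orth_proj_unique:
  fixes V :: "'a::{real_inner,complete_space} set"
  assumes "subspace V" "closed V" "y \<in> V" "\<forall>z\<in>V. inner (x - y) z = 0"
  shows "orth_proj V x = y"
  using orth_uniq_aux[OF assms(1,3,4)] orth_proj_char[OF assms(1,2), of x] by blast

lemma orth_proj_in: "subspace V \<Longrightarrow> closed V \<Longrightarrow> orth_proj V (x::'a::{real_inner,complete_space}) \<in> V"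
  using orth_proj_char by blast

lemma orth_proj_orth: "subspace V \<Longrightarrow> closed V \<Longrightarrow> z \<in> V \<Longrightarrow> inner ((x::'a::{real_inner,complete_space}) - orth_proj V x) z = 0"
  using orth_proj_char by blast

lemma orth_proj_id: "subspace V \<Longrightarrow> closed V \<Longrightarrow> x \<in> V \<Longrightarrow> orth_proj V (x::'a::{real_inner,complete_space}) = x"
  by (rule orth_proj_unique) auto

lemma orth_proj_zero: "subspace V \<Longrightarrow> closed V \<Longrightarrow> (\<forall>z\<in>V. inner x z = 0) \<Longrightarrow> orth_proj V (x::'a::{real_inner,complete_space}) = 0"
  by (rule orth_proj_unique) (auto simp: subspace_0)

lemma orth_proj_add:
  fixes V :: "'a::{real_inner,complete_space} set"
  assumes "subspace V" "closed V"
  shows "orth_proj V (x + y) = orth_proj V x + orth_proj V y"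
proof (rule orth_proj_unique[OF assms])
  show "orth_proj V x + orth_proj V y \<in> V"
    by (rule subspace_add[OF assms(1) orth_proj_in[OF assms] orth_proj_in[OF assms]])
  show "\<forall>z\<in>V. inner (x + y - (orth_proj V x + orth_proj V y)) z = 0"
  proof
    fix z assume z: "z \<in> V"
    have 1: "inner (x - orth_proj V x) z = 0" by (rule orth_proj_orth[OF assms z])
    have 2: "inner (y - orth_proj V y) z = 0" by (rule orth_proj_orth[OF assms z])
    have e: "x + y - (orth_proj V x + orth_proj V y) = (x - orth_proj V x) + (y - orth_proj V y)" by simp
    show "inner (x + y - (orth_proj V x + orth_proj V y)) z = 0" unfolding e inner_add_left using 1 2 by simp
  qed
qed

lemma orth_proj_scale:
  fixes V :: "'a::{real_inner,complete_space} set"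
  assumes "subspace V" "closed V"
  shows "orth_proj V (r *\<^sub>R x) = r *\<^sub>R orth_proj V x"
proof (rule orth_proj_unique[OF assms])
  show "r *\<^sub>R orth_proj V x \<in> V"
    by (rule subspace_scale[OF assms(1) orth_proj_in[OF assms]])
  show "\<forall>z\<in>V. inner (r *\<^sub>R x - r *\<^sub>R orth_proj V x) z = 0"
  proof
    fix z assume z: "z \<in> V"
    have 1: "inner (x - orth_proj V x) z = 0" by (rule orth_proj_orth[OF assms z])
    have "r *\<^sub>R x - r *\<^sub>R orth_proj V x = r *\<^sub>R (x - orth_proj V x)" by (simp add: scaleR_diff_right)
    then show "inner (r *\<^sub>R x - r *\<^sub>R orth_proj V x) z = 0" using 1 by simp
  qed
qed

lemma orth_proj_linear:
  fixes V :: "'a::{real_inner,complete_space} set"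
  assumes "subspace V" "closed V"
  shows "linear (orth_proj V)"
  by (rule linearI) (simp_all add: orth_proj_add[OF assms] orth_proj_scale[OF assms])

lemma orth_proj_diff:
  fixes V :: "'a::{real_inner,complete_space} set"
  assumes "subspace V" "closed V"
  shows "orth_proj V (x - y) = orth_proj V x - orth_proj V y"
  using linear_diff[OF orth_proj_linear[OF assms]] .

lemma orth_proj_selfadj:
  fixes V :: "'a::{real_inner,complete_space} set"
  assumes "subspace V" "closed V"
  shows "inner (orth_proj V x) y = inner x (orth_proj V y)"
proof -
  let ?P = "orth_proj V"
  have 1: "inner (y - ?P y) (?P x) = 0" using orth_proj_orth[OF assms orth_proj_in[OF assms]] .
  have 2: "inner (x - ?P x) (?P y) = 0" using orth_proj_orth[OF assms orth_proj_in[OF assms]] .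
  have "inner (?P x) y = inner y (?P x)" by (rule inner_commute)
  also have "\<dots> = inner (?P y) (?P x)" using 1 by (simp add: inner_diff_left)
  also have "\<dots> = inner (?P x) (?P y)" by (rule inner_commute)
  also have "\<dots> = inner x (?P y)" using 2 by (simp add: inner_diff_left)
  finally show ?thesis .
qed

lemma orth_proj_norm:
  fixes V :: "'a::{real_inner,complete_space} set"
  assumes "subspace V" "closed V"
  shows "norm (orth_proj V x) \<le> norm x"
proof -
  let ?P = "orth_proj V"
  have o: "inner (x - ?P x) (?P x) = 0" using orth_proj_orth[OF assms orth_proj_in[OF assms]] .
  then have "orthogonal (?P x) (x - ?P x)" unfolding orthogonal_def by (simp only: inner_commute)
  then have "(norm (?P x + (x - ?P x)))\<^sup>2 = (norm (?P x))\<^sup>2 + (norm (x - ?P x))\<^sup>2"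
    by (rule norm_add_Pythagorean)
  then have "(norm x)\<^sup>2 = (norm (?P x))\<^sup>2 + (norm (x - ?P x))\<^sup>2" by simp
  then have "(norm (?P x))\<^sup>2 \<le> (norm x)\<^sup>2" by simp
  then show ?thesis by (rule power2_le_imp_le) simp
qed

lemma orth_proj_bounded_linear:
  fixes V :: "'a::{real_inner,complete_space} set"
  assumes "subspace V" "closed V"
  shows "bounded_linear (orth_proj V)"
  by (rule bounded_linear_intro[where K=1]) (simp_all add: orth_proj_add[OF assms] orth_proj_scale[OF assms] orth_proj_norm[OF assms])

lemma closed_span_finite:
  fixes S :: "'a::{real_inner,complete_space} set"
  assumes "finite S" shows "closed (span S)"
  using assms
proof (induction S rule: finite_induct)
  case empty then show ?case by simp
next
  case (insert x S)
  show ?case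
  proof (cases "x \<in> span S")
    case True
    have "span (insert x S) = span S" using True by (rule span_redundant)
    then show ?thesis using insert.IH by simp
  next
    case False
    let ?P = "orth_proj (span S)"
    have sS: "subspace (span S)" by simp
    note cS = insert.IH
    define d where "d = x - ?P x"
    have dorth: "inner z d = 0" if "z \<in> span S" for z
      using orth_proj_orth[OF sS cS that, of x] unfolding d_def by (simp add: inner_commute)
    have "d \<noteq> 0"
    proof
      assume "d = 0"
      then have "x = ?P x" unfolding d_def by simp
      then show False using False orth_proj_in[OF sS cS, of x] by simp
    qed
    have xd: "inner x d = inner d d"
    proof -
      have "inner (?P x) d = 0" using dorth orth_proj_in[OF sS cS] by blast
      then show ?thesis unfolding d_def by (simp add: inner_diff_left)
    qed
    have xd0: "inner x d \<noteq> 0" using xd \<open>d \<noteq> 0\<close> by simp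
    show ?thesis unfolding closed_sequential_limits
    proof (intro allI impI)
      fix f l assume fl: "(\<forall>n. f n \<in> span (insert x S)) \<and> f \<longlonglongrightarrow> l"
      then have "\<forall>n. \<exists>k. f n - k *\<^sub>R x \<in> span S" unfolding span_insert by blast
      then obtain k where k: "\<And>n. f n - k n *\<^sub>R x \<in> span S" by (rule choice[THEN exE]) blast
      have keq: "k n = inner (f n) d / inner x d" for n
      proof -
        have "inner (f n - k n *\<^sub>R x) d = 0" using dorth k by blast
        then have "inner (f n) d = k n * inner x d" by (simp add: inner_diff_left)
        then show ?thesis using xd0 by simp
      qed
      have "(\<lambda>n. inner (f n) d / inner x d) \<longlonglongrightarrow> inner l d / inner x d"
        using fl xd0 by (intro tendsto_intros) auto
      moreover have "k = (\<lambda>n. inner (f n) d / inner x d)" using keq by (rule ext)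
      ultimately have "k \<longlonglongrightarrow> inner l d / inner x d" by simp
      then have "(\<lambda>n. f n - k n *\<^sub>R x) \<longlonglongrightarrow> l - (inner l d / inner x d) *\<^sub>R x"
        using fl by (intro tendsto_intros) auto
      moreover have "\<forall>n. f n - k n *\<^sub>R x \<in> span S" using k by blast
      ultimately have "l - (inner l d / inner x d) *\<^sub>R x \<in> span S"
        using closed_sequentially[OF cS, where f="\<lambda>n. f n - k n *\<^sub>R x"] by blast
      then show "l \<in> span (insert x S)" unfolding span_insert by blast
    qed
  qed
qed


section \<open>Finite-dimensional subspaces\<close>

lemma fd_closed:
  fixes V :: "'a::{real_inner,complete_space} set"
  assumes "subspace V" "V \<subseteq> span S" "finite S"
  shows "closed V"
proof -
  obtain B where B: "B \<subseteq> V" "independent B" "V \<subseteq> span B" using maximal_independent_subset by blast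
  have "B \<subseteq> span S" using B(1) assms(2) by (rule subset_trans)
  then have fB: "finite B" by (rule conjunct1[OF independent_span_bound[OF assms(3) B(2)]])
  have "span B \<subseteq> V" using B(1) assms(1) by (rule span_minimal)
  then have "V = span B" using B(3) by blast
  then show ?thesis using closed_span_finite[OF fB] by simp
qed

lemma dim_strict:
  fixes U W :: "'a::real_vector set"
  assumes "subspace W" "W \<subseteq> U" "W \<noteq> U" "U \<subseteq> span S" "finite S"
  shows "dim W < dim U"
proof -
  obtain B where B: "B \<subseteq> W" "independent B" "W \<subseteq> span B" using maximal_independent_subset by blast
  obtain BU where BU: "BU \<subseteq> U" "independent BU" "U \<subseteq> span BU" using maximal_independent_subset by blast
  have "BU \<subseteq> span S" using BU(1) assms(4) by (rule subset_trans)
  then have fBU: "finite BU" by (rule conjunct1[OF independent_span_bound[OF assms(5) BU(2)]])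
  obtain u where u: "u \<in> U" "u \<notin> W" using assms(2,3) by blast
  have "span B \<subseteq> W" using B(1) assms(1) by (rule span_minimal)
  then have uB: "u \<notin> span B" using u by blast
  have ind: "independent (insert u B)" using independent_insertI[OF uB B(2)] .
  have "insert u B \<subseteq> U" using u(1) B(1) assms(2) by blast
  then have "insert u B \<subseteq> span BU" using BU(3) by (rule subset_trans)
  then have fc: "finite (insert u B) \<and> card (insert u B) \<le> card BU"
    by (rule independent_span_bound[OF fBU ind])
  have "u \<notin> B" using uB span_base by blast
  then have "card (insert u B) = Suc (card B)" using fc by simp
  moreover have "card B = dim W" using basis_card_eq_dim[OF B(1) B(3) B(2)] .
  moreover have "card BU = dim U" using basis_card_eq_dim[OF BU(1) BU(3) BU(2)] .
  ultimately show ?thesis using fc by simp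
qed

section \<open>The representation setting\<close>

locale rep_setting =
  fixes G :: "('g, 'b) monoid_scheme"
    and J :: "'a::{real_inner, complete_space} \<Rightarrow> 'a"
    and \<pi> :: "'g \<Rightarrow> 'a \<Rightarrow> 'a"
  assumes grp: "group G" and fin: "finite (carrier G)"
    and cJ: "cplx_structure J" and ur: "unitary_rep G J \<pi>"
begin

lemma J_linear: "linear J" using cJ unfolding cplx_structure_def by blast
lemma JJ: "J (J x) = - x" using cJ unfolding cplx_structure_def by blast
lemma J_inner: "inner (J x) (J y) = inner x y" using cJ unfolding cplx_structure_def by blast
lemma J_inner_left: "inner (J x) y = - inner x (J y)"
proof -
  have "inner (J x) y = inner (J (J x)) (J y)" by (simp add: J_inner)
  then show ?thesis by (simp add: JJ)
qed
lemma J_norm: "norm (J x) = norm x"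
  using J_inner[of x x] by (simp add: norm_eq_sqrt_inner)
lemma J_bl: "bounded_linear J"
  by (rule bounded_linear_intro[where K=1]) (simp_all add: linear_add[OF J_linear] linear_scale[OF J_linear] J_norm)

lemma one_c: "\<one>\<^bsub>G\<^esub> \<in> carrier G" using grp by (simp add: group.is_monoid monoid.one_closed)
lemma mult_c: "g \<in> carrier G \<Longrightarrow> h \<in> carrier G \<Longrightarrow> g \<otimes>\<^bsub>G\<^esub> h \<in> carrier G"
  using grp by (simp add: group.is_monoid monoid.m_closed)
lemma inv_c: "g \<in> carrier G \<Longrightarrow> inv\<^bsub>G\<^esub> g \<in> carrier G" using grp by (simp add: group.inv_closed)

lemma pi_linear: "g \<in> carrier G \<Longrightarrow> linear (\<pi> g)" using ur unfolding unitary_rep_def clinear_def by blast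
lemma pi_J: "g \<in> carrier G \<Longrightarrow> \<pi> g (J x) = J (\<pi> g x)" using ur unfolding unitary_rep_def clinear_def by blast
lemma pi_inner: "g \<in> carrier G \<Longrightarrow> inner (\<pi> g x) (\<pi> g y) = inner x y" using ur unfolding unitary_rep_def by blast
lemma pi_mult: "g \<in> carrier G \<Longrightarrow> h \<in> carrier G \<Longrightarrow> \<pi> (g \<otimes>\<^bsub>G\<^esub> h) x = \<pi> g (\<pi> h x)"
  using ur unfolding unitary_rep_def by (simp add: comp_def)
lemma pi_one: "\<pi> \<one>\<^bsub>G\<^esub> x = x" using ur unfolding unitary_rep_def by simp
lemma pi_inv1: "g \<in> carrier G \<Longrightarrow> \<pi> (inv\<^bsub>G\<^esub> g) (\<pi> g x) = x"
  using pi_mult[OF inv_c, of g g x] grp by (simp add: group.l_inv pi_one)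
lemma pi_inv2: "g \<in> carrier G \<Longrightarrow> \<pi> g (\<pi> (inv\<^bsub>G\<^esub> g) x) = x"
  using pi_mult[OF _ inv_c, of g g x] grp by (simp add: group.r_inv pi_one)
lemma pi_inner_left: "g \<in> carrier G \<Longrightarrow> inner (\<pi> g x) y = inner x (\<pi> (inv\<^bsub>G\<^esub> g) y)"
  using pi_inner[of g x "\<pi> (inv\<^bsub>G\<^esub> g) y"] by (simp add: pi_inv2)
lemma pi_norm: "g \<in> carrier G \<Longrightarrow> norm (\<pi> g x) = norm x"
  using pi_inner[of g x x] by (simp add: norm_eq_sqrt_inner)
lemma pi_bl: "g \<in> carrier G \<Longrightarrow> bounded_linear (\<pi> g)"
  by (rule bounded_linear_intro[where K=1]) (simp_all add: linear_add[OF pi_linear] linear_scale[OF pi_linear] pi_norm)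

lemma inv_subspace_iff: "inv_subspace G J \<pi> V \<longleftrightarrow> subspace V \<and> closed V \<and> J ` V \<subseteq> V \<and> (\<forall>g\<in>carrier G. \<pi> g ` V \<subseteq> V)"
  unfolding inv_subspace_def csubspace_def by blast

lemma bl_closure_span:
  assumes L: "bounded_linear L" and LX: "L ` X \<subseteq> span X"
  shows "L ` closure (span X) \<subseteq> closure (span X)"
proof -
  have lin: "linear L" using L bounded_linear.linear by blast
  have "L ` span X = span (L ` X)" using span_linear_image[OF lin] by simp
  also have "\<dots> \<subseteq> span X" using LX by (simp add: span_minimal)
  finally have "L ` span X \<subseteq> closure (span X)" using closure_subset by blast
  then show ?thesis using image_closure_subset[OF linear_continuous_on[OF L]] by blast
qed

lemma inv_closure_span:
  assumes "\<And>g x. g \<in> carrier G \<Longrightarrow> x \<in> X \<Longrightarrow> \<pi> g x \<in> span X"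
    and "\<And>x. x \<in> X \<Longrightarrow> J x \<in> span X"
  shows "inv_subspace G J \<pi> (closure (span X))"
  unfolding inv_subspace_iff
proof (intro conjI ballI)
  show "subspace (closure (span X))" by (simp add: subspace_closure_gen)
  show "closed (closure (span X))" by simp
  show "J ` closure (span X) \<subseteq> closure (span X)" using bl_closure_span[OF J_bl] assms(2) by blast
  fix g assume "g \<in> carrier G"
  then show "\<pi> g ` closure (span X) \<subseteq> closure (span X)" using bl_closure_span[OF pi_bl] assms(1) by blast
qed

definition gens :: "'a set \<Rightarrow> 'a set" where
  "gens A = (\<Union>g\<in>carrier G. \<pi> g ` A \<union> J ` \<pi> g ` A)"

lemma acl_eq: "acl_pi G J \<pi> A = closure (span (gens A))"
  unfolding acl_pi_def gens_def by simp

lemma acl_inv: "inv_subspace G J \<pi> (acl_pi G J \<pi> A)"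
  unfolding acl_eq
proof (rule inv_closure_span)
  fix g x assume g: "g \<in> carrier G" and x: "x \<in> gens A"
  then obtain h a where h: "h \<in> carrier G" "a \<in> A" "x = \<pi> h a \<or> x = J (\<pi> h a)" unfolding gens_def by blast
  have "\<pi> g x = \<pi> (g \<otimes>\<^bsub>G\<^esub> h) a \<or> \<pi> g x = J (\<pi> (g \<otimes>\<^bsub>G\<^esub> h) a)"
    using h g by (auto simp: pi_mult pi_J)
  then have "\<pi> g x \<in> gens A" using mult_c[OF g h(1)] h(2) unfolding gens_def by blast
  then show "\<pi> g x \<in> span (gens A)" by (rule span_base)
next
  fix x assume x: "x \<in> gens A"
  then obtain h a where h: "h \<in> carrier G" "a \<in> A" "x = \<pi> h a \<or> x = J (\<pi> h a)" unfolding gens_def by blast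
  show "J x \<in> span (gens A)"
  proof (cases "x = \<pi> h a")
    case True
    then have "J x \<in> gens A" using h unfolding gens_def by blast
    then show ?thesis by (rule span_base)
  next
    case False
    then have "x = J (\<pi> h a)" using h by blast
    then have "J x = - \<pi> h a" by (simp add: JJ)
    moreover have "\<pi> h a \<in> gens A" using h unfolding gens_def by blast
    ultimately show ?thesis by (simp add: span_neg span_base)
  qed
qed

lemma acl_sub: "A \<subseteq> acl_pi G J \<pi> A"
proof
  fix a assume "a \<in> A"
  then have "\<pi> \<one>\<^bsub>G\<^esub> a \<in> gens A" using one_c unfolding gens_def by blast
  then show "a \<in> acl_pi G J \<pi> A" unfolding acl_eq using pi_one span_superset closure_subset by fastforce
qed

lemma acl_min:
  assumes "inv_subspace G J \<pi> V" "A \<subseteq> V"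
  shows "acl_pi G J \<pi> A \<subseteq> V"
proof -
  have V: "subspace V" "closed V" "J ` V \<subseteq> V" "\<forall>g\<in>carrier G. \<pi> g ` V \<subseteq> V" using assms(1) inv_subspace_iff by auto
  have "gens A \<subseteq> V" unfolding gens_def using V(3,4) assms(2) by blast
  then have "span (gens A) \<subseteq> V" using V(1) by (rule span_minimal)
  then show ?thesis unfolding acl_eq using V(2) by (rule closure_minimal)
qed

lemma acl_fd:
  assumes "finite A"
  shows "finite (gens A)" "acl_pi G J \<pi> A = span (gens A)"
proof -
  show f: "finite (gens A)" unfolding gens_def using fin assms by auto
  show "acl_pi G J \<pi> A = span (gens A)" unfolding acl_eq using closed_span_finite[OF f] by simp
qed

lemma proj_pi:
  assumes D: "inv_subspace G J \<pi> D" and g: "g \<in> carrier G"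
  shows "orth_proj D (\<pi> g x) = \<pi> g (orth_proj D x)"
proof -
  have V: "subspace D" "closed D" "J ` D \<subseteq> D" "\<forall>g\<in>carrier G. \<pi> g ` D \<subseteq> D" using D inv_subspace_iff by auto
  show ?thesis
  proof (rule orth_proj_unique[OF V(1,2)])
    show "\<pi> g (orth_proj D x) \<in> D" using V g orth_proj_in[OF V(1,2)] by blast
    show "\<forall>z\<in>D. inner (\<pi> g x - \<pi> g (orth_proj D x)) z = 0"
    proof
      fix z assume z: "z \<in> D"
      have "\<pi> (inv\<^bsub>G\<^esub> g) z \<in> D" using V(4) inv_c[OF g] z by blast
      then have "inner (x - orth_proj D x) (\<pi> (inv\<^bsub>G\<^esub> g) z) = 0" by (rule orth_proj_orth[OF V(1,2)])
      then show "inner (\<pi> g x - \<pi> g (orth_proj D x)) z = 0"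
        using pi_inner_left[OF g, of "x - orth_proj D x" z] by (simp add: linear_diff[OF pi_linear[OF g]])
    qed
  qed
qed

lemma proj_J:
  assumes D: "inv_subspace G J \<pi> D"
  shows "orth_proj D (J x) = J (orth_proj D x)"
proof -
  have V: "subspace D" "closed D" "J ` D \<subseteq> D" using D inv_subspace_iff by auto
  show ?thesis
  proof (rule orth_proj_unique[OF V(1,2)])
    show "J (orth_proj D x) \<in> D" using V orth_proj_in[OF V(1,2)] by blast
    show "\<forall>z\<in>D. inner (J x - J (orth_proj D x)) z = 0"
    proof
      fix z assume z: "z \<in> D"
      have "J z \<in> D" using V(3) z by blast
      then have "inner (x - orth_proj D x) (J z) = 0" by (rule orth_proj_orth[OF V(1,2)])
      then show "inner (J x - J (orth_proj D x)) z = 0"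
        using J_inner_left[of "x - orth_proj D x" z] by (simp add: linear_diff[OF J_linear])
    qed
  qed
qed

lemma exists_irred:
  assumes W: "inv_subspace G J \<pi> W" "W \<noteq> {0}" "W \<subseteq> span S" "finite S"
  shows "\<exists>U. irreducible_subrep G J \<pi> U \<and> U \<subseteq> W"
proof -
  define P where "P U \<longleftrightarrow> inv_subspace G J \<pi> U \<and> U \<subseteq> W \<and> U \<noteq> {0}" for U
  have "P W" using W unfolding P_def by blast
  then obtain U where U: "P U" and Umin: "\<And>Y. P Y \<Longrightarrow> dim U \<le> dim Y"
    using ex_has_least_nat[of P W dim] by blast
  have "irreducible_subrep G J \<pi> U"
    unfolding irreducible_subrep_def
  proof (intro conjI allI impI)
    show "inv_subspace G J \<pi> U" "U \<noteq> {0}" using U P_def by auto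
    fix Y assume Y: "inv_subspace G J \<pi> Y \<and> Y \<subseteq> U"
    show "Y = {0} \<or> Y = U"
    proof (rule ccontr)
      assume c: "\<not> (Y = {0} \<or> Y = U)"
      then have "P Y" using Y U unfolding P_def by blast
      then have "dim U \<le> dim Y" by (rule Umin)
      moreover have "dim Y < dim U"
        using dim_strict[of Y U S] Y c U W(3,4) inv_subspace_iff unfolding P_def by blast
      ultimately show False by simp
    qed
  qed
  then show ?thesis using U P_def by blast
qed

lemma irred_fd:
  assumes "irreducible_subrep G J \<pi> U"
  shows "\<exists>S. finite S \<and> U = span S"
proof -
  have U: "inv_subspace G J \<pi> U" "U \<noteq> {0}" "\<And>W. inv_subspace G J \<pi> W \<Longrightarrow> W \<subseteq> U \<Longrightarrow> W = {0} \<or> W = U"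
    using assms unfolding irreducible_subrep_def by auto
  have "subspace U" using U(1) inv_subspace_iff by blast
  then obtain u where u: "u \<in> U" "u \<noteq> 0" using U(2) subspace_0 by blast
  have sub: "acl_pi G J \<pi> {u} \<subseteq> U" using acl_min[OF U(1)] u by blast
  have "u \<in> acl_pi G J \<pi> {u}" using acl_sub by blast
  then have "acl_pi G J \<pi> {u} \<noteq> {0}" using u by blast
  then have "acl_pi G J \<pi> {u} = U" using U(3)[OF acl_inv sub] by blast
  then show ?thesis using acl_fd[of "{u}"] by auto
qed

lemma inv_sub_fd:
  assumes "subspace V" "J ` V \<subseteq> V" "\<forall>g\<in>carrier G. \<pi> g ` V \<subseteq> V" "V \<subseteq> span S" "finite S"
  shows "inv_subspace G J \<pi> V"
  unfolding inv_subspace_iff using assms(1,2,3) fd_closed[OF assms(1,4,5)] by (intro conjI)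

lemma isotypic_inv: "inv_subspace G J \<pi> (isotypic G J \<pi> U)"
  unfolding isotypic_def
proof (rule inv_closure_span)
  fix g x assume g: "g \<in> carrier G" and x: "x \<in> \<Union>{V. inv_subspace G J \<pi> V \<and> subrep_iso G J \<pi> U V}"
  then obtain V where V: "inv_subspace G J \<pi> V" "subrep_iso G J \<pi> U V" "x \<in> V" by blast
  then have "\<pi> g x \<in> V" using g inv_subspace_iff by blast
  then have "\<pi> g x \<in> \<Union>{V. inv_subspace G J \<pi> V \<and> subrep_iso G J \<pi> U V}" using V by blast
  then show "\<pi> g x \<in> span (\<Union>{V. inv_subspace G J \<pi> V \<and> subrep_iso G J \<pi> U V})" by (rule span_base)
next
  fix x assume x: "x \<in> \<Union>{V. inv_subspace G J \<pi> V \<and> subrep_iso G J \<pi> U V}"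
  then obtain V where V: "inv_subspace G J \<pi> V" "subrep_iso G J \<pi> U V" "x \<in> V" by blast
  then have "J x \<in> V" using inv_subspace_iff by blast
  then have "J x \<in> \<Union>{V. inv_subspace G J \<pi> V \<and> subrep_iso G J \<pi> U V}" using V by blast
  then show "J x \<in> span (\<Union>{V. inv_subspace G J \<pi> V \<and> subrep_iso G J \<pi> U V})" by (rule span_base)
qed

lemma proj_maps_iso_piece:
  assumes D: "inv_subspace G J \<pi> D" and U: "irreducible_subrep G J \<pi> U"
    and V: "inv_subspace G J \<pi> V" and iso: "subrep_iso G J \<pi> U V"
  shows "orth_proj D ` V \<subseteq> isotypic G J \<pi> U"
proof -
  let ?P = "orth_proj D"
  have Dp: "subspace D" "closed D" using D inv_subspace_iff by auto
  have Plin: "linear ?P" by (rule orth_proj_linear[OF Dp])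
  obtain T where T: "clinear J T" "bij_betw T U V" "\<forall>g\<in>carrier G. \<forall>x\<in>U. T (\<pi> g x) = \<pi> g (T x)"
    using iso unfolding subrep_iso_def by blast
  have Tlin: "linear T" and TJ: "\<And>x. T (J x) = J (T x)" using T(1) unfolding clinear_def by auto
  have TU: "T ` U = V" using T(2) unfolding bij_betw_def by blast
  obtain S where S: "finite S" "U = span S" using irred_fd[OF U] by blast
  have Uinv: "inv_subspace G J \<pi> U" "U \<noteq> {0}"
    and Umin: "\<And>W. inv_subspace G J \<pi> W \<Longrightarrow> W \<subseteq> U \<Longrightarrow> W = {0} \<or> W = U"
    using U unfolding irreducible_subrep_def by auto
  have Up: "subspace U" "J ` U \<subseteq> U" "\<forall>g\<in>carrier G. \<pi> g ` U \<subseteq> U" using Uinv inv_subspace_iff by auto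
  have Qinv: "inv_subspace G J \<pi> (isotypic G J \<pi> U)" by (rule isotypic_inv)
  then have Qsub: "subspace (isotypic G J \<pi> U)" using inv_subspace_iff by blast
  define K where "K = {u\<in>U. ?P (T u) = 0}"
  have PTlin: "linear (?P \<circ> T)" using Tlin Plin by (rule linear_compose)
  have Ksub: "subspace K"
    unfolding K_def subspace_def
  proof (intro conjI ballI allI)
    show "0 \<in> {u \<in> U. ?P (T u) = 0}" using Up(1) subspace_0 linear_0[OF Tlin] linear_0[OF Plin] by auto
  next
    fix x y assume "x \<in> {u \<in> U. ?P (T u) = 0}" "y \<in> {u \<in> U. ?P (T u) = 0}"
    then show "x + y \<in> {u \<in> U. ?P (T u) = 0}"
      using Up(1) subspace_add linear_add[OF PTlin, of x y] by auto
  next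
    fix c :: real and x assume "x \<in> {u \<in> U. ?P (T u) = 0}"
    then show "c *\<^sub>R x \<in> {u \<in> U. ?P (T u) = 0}"
      using Up(1) subspace_scale linear_scale[OF PTlin, of c x] by auto
  qed
  have KU: "K \<subseteq> U" unfolding K_def by blast
  have KJ: "J ` K \<subseteq> K"
  proof
    fix y assume "y \<in> J ` K"
    then obtain u where u: "u \<in> K" "y = J u" by blast
    have "J u \<in> U" using u(1) KU Up(2) by blast
    moreover have "?P (T (J u)) = 0" using u(1) unfolding K_def by (simp add: TJ proj_J[OF D] linear_0[OF J_linear])
    ultimately show "y \<in> K" unfolding K_def using u(2) by blast
  qed
  have Kpi: "\<forall>g\<in>carrier G. \<pi> g ` K \<subseteq> K"
  proof (intro ballI subsetI)
    fix g y assume g: "g \<in> carrier G" and "y \<in> \<pi> g ` K"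
    then obtain u where u: "u \<in> K" "y = \<pi> g u" by blast
    have uU: "u \<in> U" using u(1) KU by blast
    have "\<pi> g u \<in> U" using uU Up(3) g by blast
    moreover have "?P (T (\<pi> g u)) = 0" using u(1) T(3) g uU unfolding K_def
      by (simp add: proj_pi[OF D g] linear_0[OF pi_linear[OF g]])
    ultimately show "y \<in> K" unfolding K_def using u(2) by blast
  qed
  have "K \<subseteq> span S" using KU S(2) by simp
  then have Kinv: "inv_subspace G J \<pi> K" using Ksub KJ Kpi S(1) by (intro inv_sub_fd)
  show ?thesis
  proof (cases "K = U")
    case True
    show ?thesis
    proof
      fix y assume "y \<in> ?P ` V"
      then obtain u where u: "u \<in> U" "y = ?P (T u)" using TU by blast
      then have "y = 0" using True unfolding K_def by blast
      then show "y \<in> isotypic G J \<pi> U" using Qsub subspace_0 by blast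
    qed
  next
    case False
    then have K0: "K = {0}" using Umin[OF Kinv KU] by blast
    define V' where "V' = ?P ` V"
    have V'eq: "V' = (?P \<circ> T) ` U" unfolding V'_def TU[symmetric] by (simp add: image_comp)
    have V'sub: "subspace V'" unfolding V'eq using PTlin Up(1) by (rule real_vector.linear_subspace_image)
    have V'span: "V' \<subseteq> span ((?P \<circ> T) ` S)"
      unfolding V'eq S(2) span_linear_image[OF PTlin] by simp
    have V'J: "J ` V' \<subseteq> V'"
    proof
      fix y assume "y \<in> J ` V'"
      then obtain u where u: "u \<in> U" "y = J (?P (T u))" unfolding V'eq by auto
      then have "y = (?P \<circ> T) (J u)" by (simp add: TJ proj_J[OF D])
      moreover have "J u \<in> U" using u(1) Up(2) by blast
      ultimately show "y \<in> V'" unfolding V'eq by blast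
    qed
    have V'pi: "\<forall>g\<in>carrier G. \<pi> g ` V' \<subseteq> V'"
    proof (intro ballI subsetI)
      fix g y assume g: "g \<in> carrier G" and "y \<in> \<pi> g ` V'"
      then obtain u where u: "u \<in> U" "y = \<pi> g (?P (T u))" unfolding V'eq by auto
      then have "y = (?P \<circ> T) (\<pi> g u)" using T(3) g by (simp add: proj_pi[OF D g])
      moreover have "\<pi> g u \<in> U" using u(1) Up(3) g by blast
      ultimately show "y \<in> V'" unfolding V'eq by blast
    qed
    have V'inv: "inv_subspace G J \<pi> V'"
      by (rule inv_sub_fd[OF V'sub V'J V'pi V'span]) (simp add: S(1))
    have inj: "inj_on (?P \<circ> T) U"
    proof (rule inj_onI)
      fix x y assume x: "x \<in> U" and y: "y \<in> U" and e: "(?P \<circ> T) x = (?P \<circ> T) y"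
      have "(?P \<circ> T) (x - y) = 0" using e linear_diff[OF PTlin, of x y] by simp
      moreover have "x - y \<in> U" using x y Up(1) subspace_diff by blast
      ultimately have "x - y \<in> K" unfolding K_def by simp
      then show "x = y" using K0 by simp
    qed
    have iso': "subrep_iso G J \<pi> U V'"
      unfolding subrep_iso_def
    proof (intro exI[where x="?P \<circ> T"] conjI ballI)
      show "clinear J (?P \<circ> T)" unfolding clinear_def using PTlin by (simp add: TJ proj_J[OF D])
      show "bij_betw (?P \<circ> T) U V'" unfolding bij_betw_def V'eq using inj by simp
      fix g x assume g: "g \<in> carrier G" and x: "x \<in> U"
      show "(?P \<circ> T) (\<pi> g x) = \<pi> g ((?P \<circ> T) x)" using T(3) g x by (simp add: proj_pi[OF D g])
    qed
    have "V' \<subseteq> \<Union>{V. inv_subspace G J \<pi> V \<and> subrep_iso G J \<pi> U V}" using V'inv iso' by blast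
    also have "\<dots> \<subseteq> isotypic G J \<pi> U" unfolding isotypic_def using span_superset closure_subset by (rule subset_trans)
    finally show ?thesis unfolding V'_def .
  qed
qed

lemma proj_maps_isotypic:
  assumes D: "inv_subspace G J \<pi> D" and U: "irreducible_subrep G J \<pi> U"
  shows "orth_proj D ` isotypic G J \<pi> U \<subseteq> isotypic G J \<pi> U"
proof -
  let ?P = "orth_proj D"
  let ?Y = "\<Union>{V. inv_subspace G J \<pi> V \<and> subrep_iso G J \<pi> U V}"
  let ?Q = "isotypic G J \<pi> U"
  have Dp: "subspace D" "closed D" using D inv_subspace_iff by auto
  have Qp: "subspace ?Q" "closed ?Q" using isotypic_inv inv_subspace_iff by auto
  have "?P ` ?Y \<subseteq> ?Q" using proj_maps_iso_piece[OF D U] by blast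
  then have "span (?P ` ?Y) \<subseteq> ?Q" using Qp(1) by (rule span_minimal)
  then have "?P ` span ?Y \<subseteq> ?Q" using span_linear_image[OF orth_proj_linear[OF Dp]] by simp
  then have c: "?P ` span ?Y \<subseteq> closure (span ?Y)" unfolding isotypic_def .
  have "?P ` closure (span ?Y) \<subseteq> closure (span ?Y)"
    by (rule image_closure_subset[OF linear_continuous_on[OF orth_proj_bounded_linear[OF Dp]] closed_closure c])
  then show ?thesis unfolding isotypic_def .
qed

end

lemma proj_commute:
  fixes D Q :: "'a::{real_inner,complete_space} set"
  assumes Dp: "subspace D" "closed D" and Qp: "subspace Q" "closed Q" and PQ: "orth_proj D ` Q \<subseteq> Q"
  shows "orth_proj Q (orth_proj D x) = orth_proj D (orth_proj Q x)"
proof (rule orth_proj_unique[OF Qp])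
  show "orth_proj D (orth_proj Q x) \<in> Q" using PQ orth_proj_in[OF Qp] by blast
  show "\<forall>q\<in>Q. inner (orth_proj D x - orth_proj D (orth_proj Q x)) q = 0"
  proof
    fix q assume q: "q \<in> Q"
    have "orth_proj D q \<in> Q" using PQ q by blast
    then have "inner (x - orth_proj Q x) (orth_proj D q) = 0" by (rule orth_proj_orth[OF Qp])
    then show "inner (orth_proj D x - orth_proj D (orth_proj Q x)) q = 0"
      by (simp add: orth_proj_diff[OF Dp, symmetric] orth_proj_selfadj[OF Dp])
  qed
qed

context rep_setting
begin

lemma self_iso:
  assumes "inv_subspace G J \<pi> U"
  shows "U \<subseteq> isotypic G J \<pi> U"
proof -
  have "subrep_iso G J \<pi> U U"
    unfolding subrep_iso_def clinear_def
    by (intro exI[where x=id] conjI ballI allI) (simp_all add: linear_id bij_betw_id)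
  then have "U \<subseteq> \<Union>{V. inv_subspace G J \<pi> V \<and> subrep_iso G J \<pi> U V}" using assms by blast
  also have "\<dots> \<subseteq> isotypic G J \<pi> U" unfolding isotypic_def using span_superset closure_subset by (rule subset_trans)
  finally show ?thesis .
qed

lemma nonzero_iso:
  assumes x: "x \<noteq> 0"
  shows "\<exists>U. irreducible_subrep G J \<pi> U \<and> orth_proj (isotypic G J \<pi> U) x \<noteq> 0"
proof -
  let ?W = "acl_pi G J \<pi> {x}"
  have Winv: "inv_subspace G J \<pi> ?W" by (rule acl_inv)
  have xW: "x \<in> ?W" using acl_sub by blast
  then have W0: "?W \<noteq> {0}" using x by blast
  have Wfd: "?W \<subseteq> span (gens {x})" "finite (gens {x})" using acl_fd[of "{x}"] by auto
  obtain U where U: "irreducible_subrep G J \<pi> U" "U \<subseteq> ?W"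
    using exists_irred[OF Winv W0 Wfd] by blast
  have Uinv: "inv_subspace G J \<pi> U" "U \<noteq> {0}" using U(1) unfolding irreducible_subrep_def by auto
  then have Usub: "subspace U" using inv_subspace_iff by blast
  let ?Q = "isotypic G J \<pi> U"
  have Qinv: "inv_subspace G J \<pi> ?Q" by (rule isotypic_inv)
  then have Qp: "subspace ?Q" "closed ?Q" "J ` ?Q \<subseteq> ?Q" "\<forall>g\<in>carrier G. \<pi> g ` ?Q \<subseteq> ?Q"
    using inv_subspace_iff by auto
  have UQ: "U \<subseteq> ?Q" using self_iso[OF Uinv(1)] .
  have "orth_proj ?Q x \<noteq> 0"
  proof
    assume P0: "orth_proj ?Q x = 0"
    define Orth where "Orth = {y. \<forall>q\<in>?Q. inner q y = 0}"
    have xO: "x \<in> Orth"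
    proof -
      have "inner (x - orth_proj ?Q x) q = 0" if "q \<in> ?Q" for q using orth_proj_orth[OF Qp(1,2) that] .
      then show ?thesis unfolding Orth_def using P0 by (simp add: inner_commute)
    qed
    have Osub: "subspace Orth"
      unfolding subspace_def Orth_def by (simp add: inner_add_right)
    have "Orth = (\<Inter>q\<in>?Q. {y. inner q y = 0})" unfolding Orth_def by blast
    then have Ocl: "closed Orth" by (simp add: closed_INT closed_hyperplane)
    have OJ: "J ` Orth \<subseteq> Orth"
    proof
      fix y assume "y \<in> J ` Orth"
      then obtain z where z: "z \<in> Orth" "y = J z" by blast
      have "inner q (J z) = 0" if q: "q \<in> ?Q" for q
      proof -
        have "J q \<in> ?Q" using Qp(3) q by blast
        then have "inner (J q) z = 0" using z(1) unfolding Orth_def by blast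
        then show ?thesis using J_inner_left[of q z] by simp
      qed
      then show "y \<in> Orth" unfolding Orth_def using z(2) by blast
    qed
    have Opi: "\<forall>g\<in>carrier G. \<pi> g ` Orth \<subseteq> Orth"
    proof (intro ballI subsetI)
      fix g y assume g: "g \<in> carrier G" and "y \<in> \<pi> g ` Orth"
      then obtain z where z: "z \<in> Orth" "y = \<pi> g z" by blast
      have "inner q (\<pi> g z) = 0" if q: "q \<in> ?Q" for q
      proof -
        have "\<pi> (inv\<^bsub>G\<^esub> g) q \<in> ?Q" using Qp(4) q inv_c[OF g] by blast
        then have "inner (\<pi> (inv\<^bsub>G\<^esub> g) q) z = 0" using z(1) unfolding Orth_def by blast
        then show ?thesis using pi_inner_left[OF g, of z q] by (simp add: inner_commute)
      qed
      then show "y \<in> Orth" unfolding Orth_def using z(2) by blast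
    qed
    have Oinv: "inv_subspace G J \<pi> Orth" unfolding inv_subspace_iff using Osub Ocl OJ Opi by (intro conjI)
    have "?W \<subseteq> Orth" using acl_min[OF Oinv] xO by blast
    obtain u where u: "u \<in> U" "u \<noteq> 0" using Uinv(2) Usub subspace_0 by blast
    have "u \<in> Orth" using u(1) U(2) \<open>?W \<subseteq> Orth\<close> by blast
    moreover have "u \<in> ?Q" using u(1) UQ by blast
    ultimately have "inner u u = 0" unfolding Orth_def by blast
    then show False using u(2) by simp
  qed
  then show ?thesis using U(1) by blast
qed

end

theorem mainTheorem15:
  fixes G :: "('g, 'b) monoid_scheme"
    and J :: "'a::{real_inner, complete_space} \<Rightarrow> 'a"
    and \<pi> :: "'g \<Rightarrow> 'a \<Rightarrow> 'a"
    and a :: "nat \<Rightarrow> 'a" and n :: nat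
    and B C :: "'a set"
  assumes "group G" and "finite (carrier G)"
    and "cplx_structure J"
    and "unitary_rep G J \<pi>"
    and "\<not> (\<exists>S. finite S \<and> span S = (UNIV :: 'a set))"
  shows "star_indep G J \<pi> a n B C \<longleftrightarrow>
    (\<forall>j\<in>{1..n}. orth_proj (acl_pi G J \<pi> (B \<union> C)) (a j) = orth_proj (acl_pi G J \<pi> C) (a j))"
proof -
  interpret rep_setting G J \<pi> by (rule rep_setting.intro[OF assms(1-4)])
  define D where "D = acl_pi G J \<pi> (B \<union> C)"
  define E where "E = acl_pi G J \<pi> C"
  have Dinv: "inv_subspace G J \<pi> D" unfolding D_def by (rule acl_inv)
  have Einv: "inv_subspace G J \<pi> E" unfolding E_def by (rule acl_inv)
  have Dp: "subspace D" "closed D" using Dinv inv_subspace_iff by auto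
  have Ep: "subspace E" "closed E" using Einv inv_subspace_iff by auto
  have Qp: "subspace (isotypic G J \<pi> U)" "closed (isotypic G J \<pi> U)" for U
    using isotypic_inv inv_subspace_iff by auto
  have commD: "orth_proj (isotypic G J \<pi> U) (orth_proj D y) = orth_proj D (orth_proj (isotypic G J \<pi> U) y)"
    if "irreducible_subrep G J \<pi> U" for U y
    by (rule proj_commute[OF Dp Qp proj_maps_isotypic[OF Dinv that]])
  have commE: "orth_proj (isotypic G J \<pi> U) (orth_proj E y) = orth_proj E (orth_proj (isotypic G J \<pi> U) y)"
    if "irreducible_subrep G J \<pi> U" for U y
    by (rule proj_commute[OF Ep Qp proj_maps_isotypic[OF Einv that]])
  show ?thesis
    unfolding star_indep_def D_def[symmetric] E_def[symmetric]
  proof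
    assume H: "\<forall>j\<in>{1..n}. \<forall>U. irreducible_subrep G J \<pi> U \<longrightarrow>
        orth_proj D (orth_proj (isotypic G J \<pi> U) (a j)) = orth_proj E (orth_proj (isotypic G J \<pi> U) (a j))"
    show "\<forall>j\<in>{1..n}. orth_proj D (a j) = orth_proj E (a j)"
    proof (intro ballI, rule ccontr)
      fix j assume j: "j \<in> {1..n}" and ne: "orth_proj D (a j) \<noteq> orth_proj E (a j)"
      then have "orth_proj D (a j) - orth_proj E (a j) \<noteq> 0" by simp
      then obtain U where U: "irreducible_subrep G J \<pi> U"
        and nz: "orth_proj (isotypic G J \<pi> U) (orth_proj D (a j) - orth_proj E (a j)) \<noteq> 0"
        using nonzero_iso by blast
      have "orth_proj (isotypic G J \<pi> U) (orth_proj D (a j) - orth_proj E (a j))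
          = orth_proj (isotypic G J \<pi> U) (orth_proj D (a j)) - orth_proj (isotypic G J \<pi> U) (orth_proj E (a j))"
        by (rule orth_proj_diff[OF Qp])
      also have "\<dots> = orth_proj D (orth_proj (isotypic G J \<pi> U) (a j)) - orth_proj E (orth_proj (isotypic G J \<pi> U) (a j))"
        by (simp add: commD[OF U] commE[OF U])
      also have "\<dots> = 0" using H j U by simp
      finally show False using nz by simp
    qed
  next
    assume H: "\<forall>j\<in>{1..n}. orth_proj D (a j) = orth_proj E (a j)"
    show "\<forall>j\<in>{1..n}. \<forall>U. irreducible_subrep G J \<pi> U \<longrightarrow>
        orth_proj D (orth_proj (isotypic G J \<pi> U) (a j)) = orth_proj E (orth_proj (isotypic G J \<pi> U) (a j))"
    proof (intro ballI allI impI)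
      fix j U assume j: "j \<in> {1..n}" and U: "irreducible_subrep G J \<pi> U"
      have "orth_proj D (orth_proj (isotypic G J \<pi> U) (a j)) = orth_proj (isotypic G J \<pi> U) (orth_proj D (a j))"
        by (simp add: commD[OF U])
      also have "\<dots> = orth_proj (isotypic G J \<pi> U) (orth_proj E (a j))" using H j by simp
      also have "\<dots> = orth_proj E (orth_proj (isotypic G J \<pi> U) (a j))" by (simp add: commE[OF U])
      finally show "orth_proj D (orth_proj (isotypic G J \<pi> U) (a j)) = orth_proj E (orth_proj (isotypic G J \<pi> U) (a j))" .
    qed
  qed
qed

end
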